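(* Let $I\subseteq R$ be an $\mathfrak m$-primary monomial ideal. The following are equivalent: (1) $I$ is good; (2) for every integer $l\ge 1$ and every monomial $m\in I^l$ there exist $a_1,\dots,a_n\in\mathbb N$ with $m\in B_{a_1,\dots,a_n}$ and $a_1+\dots+a_n\ge l-1$; (3) for every integer $l\ge1$ and all $m_1,\dots,m_l\in G(I)$ there exist $a_1,\dots,a_n\in\mathbb N$ with $m_1\cdots m_l\in B_{a_1,\dots,a_n}$ and $a_1+\dots+a_n\ge l-1$.
   Context: Let $\mathbb K$ be a field, $R=\mathbb K[x_1,\dots,x_n]$, $\mathfrak m=\langle x_1,\dots,x_n\rangle$, $\mathbb N=\{0,1,2,\dots\}$. A monomial $x_1^{\alpha_1}\cdots x_n^{\alpha_n}$ is identified with the point $(\alpha_1,\dots,\alpha_n)\in\mathbb N^n$. For a monomial ideal $I$, $G(I)$ denotes its (unique) minimal monomial generating set. If $I$ is an $\mathfrak m$-primary monomial ideal, then for each $i$ there is a unique $d_i\ge1$ with $x_i^{d_i}\in G(I)$; write $\mu_i=x_i^{d_i}$. For $(a_1,\dots,a_n)\in\mathbb N^n$ the box associated to $I$ is $B_{a_1,\dots,a_n}=([a_1d_1,(a_1+1)d_1]\times\cdots\times[a_nd_n,(a_n+1)d_n])\cap\mathbb N^n$; a monomial belongs to a box if its exponent vector does. $I$ is called good if for every integer $l\ge1$, every element of $G(I^l)$ belongs to some box $B_{a_1,\dots,a_n}$ with $a_1+\dots+a_n=l-1$; otherwise $I$ is called bad. *)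

theory Defs
  imports Main
begin

text \<open>Monomials in variables indexed by the finite type 'n are exponent vectors
  'n \<Rightarrow> nat; the product of monomials is the sum of exponent vectors and
  divisibility is the pointwise order. A monomial ideal is represented by the
  set of monomials it contains (it is the K-span of them), i.e. an upward
  closed set of exponent vectors.\<close>

type_synonym 'n monomial = "'n \<Rightarrow> nat"

definition monomial_ideal :: "'n monomial set \<Rightarrow> bool" where
  "monomial_ideal I \<longleftrightarrow> (\<forall>u v. u \<in> I \<and> u \<le> v \<longrightarrow> v \<in> I)"

definition mon_radical :: "'n monomial set \<Rightarrow> 'n monomial set" where
  "mon_radical I = {u. \<exists>k::nat. k \<ge> 1 \<and> (\<lambda>i. k * u i) \<in> I}"

text \<open>Monomials of the maximal ideal m = (x_1,...,x_n): all nonconstant monomials.\<close>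
definition mon_max :: "'n monomial set" where
  "mon_max = {u. u \<noteq> (\<lambda>_. 0)}"

definition m_primary :: "'n monomial set \<Rightarrow> bool" where
  "m_primary I \<longleftrightarrow> monomial_ideal I \<and> mon_radical I = mon_max"

definition mingens :: "'n monomial set \<Rightarrow> 'n monomial set" where
  "mingens I = {u \<in> I. \<forall>v \<in> I. v \<le> u \<longrightarrow> v = u}"

definition mprod :: "'n monomial list \<Rightarrow> 'n monomial" where
  "mprod ms = (\<lambda>i. sum_list (map (\<lambda>m. m i) ms))"

definition mon_pow :: "'n monomial set \<Rightarrow> nat \<Rightarrow> 'n monomial set" where
  "mon_pow I l = {u. \<exists>ms. length ms = l \<and> set ms \<subseteq> I \<and> mprod ms \<le> u}"

definition xpow :: "'n \<Rightarrow> nat \<Rightarrow> 'n monomial" where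
  "xpow i d = (\<lambda>j. if j = i then d else 0)"

definition pdeg :: "'n monomial set \<Rightarrow> 'n \<Rightarrow> nat" where
  "pdeg I i = (THE d. d \<ge> 1 \<and> xpow i d \<in> mingens I)"

definition in_box :: "'n monomial set \<Rightarrow> 'n monomial \<Rightarrow> 'n monomial \<Rightarrow> bool" where
  "in_box I a u \<longleftrightarrow> (\<forall>i. a i * pdeg I i \<le> u i \<and> u i \<le> (a i + 1) * pdeg I i)"

definition good :: "('n::finite) monomial set \<Rightarrow> bool" where
  "good I \<longleftrightarrow> (\<forall>l::nat. l \<ge> 1 \<longrightarrow> (\<forall>u \<in> mingens (mon_pow I l).
      \<exists>a. (\<Sum>i\<in>UNIV. a i) = l - 1 \<and> in_box I a u))"

end

theory Submission imports Defs begin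
lemma exists_mingen:
  fixes S :: "('n::finite) monomial set"
  shows "u \<in> S \<Longrightarrow> \<exists>g \<in> mingens S. g \<le> u"
proof (induction "\<Sum>i\<in>UNIV. u i" arbitrary: u rule: less_induct)
  case less
  show ?case
  proof (cases "u \<in> mingens S")
    case True then show ?thesis by auto
  next
    case False
    then obtain v where v: "v \<in> S" "v \<le> u" "v \<noteq> u" using less.prems unfolding mingens_def by auto
    then obtain j where "v j \<noteq> u j" by (auto simp: fun_eq_iff)
    then have j: "v j < u j" using v(2) le_funD[OF v(2), of j] by simp
    then have "(\<Sum>i\<in>UNIV. v i) < (\<Sum>i\<in>UNIV. u i)"
      using v(2) j by (intro sum_strict_mono_ex1) (auto simp: le_fun_def)
    from less.hyps[OF this v(1)] obtain g where "g \<in> mingens S" "g \<le> v" by auto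
    then show ?thesis using v(2) by (meson order_trans)
  qed
qed
lemma pdeg_props:
  fixes I :: "('n::finite) monomial set"
  assumes "m_primary I"
  shows "pdeg I i \<ge> 1 \<and> xpow i (pdeg I i) \<in> mingens I"
proof -
  have mi: "monomial_ideal I" and rad: "mon_radical I = mon_max" using assms by (auto simp: m_primary_def)
  have "xpow i 1 \<in> mon_max" by (auto simp: mon_max_def xpow_def fun_eq_iff)
  then obtain k :: nat where k: "k \<ge> 1" "(\<lambda>j. k * xpow i 1 j) \<in> I"
    using rad by (auto simp: mon_radical_def)
  have z: "(\<lambda>_. 0) \<notin> I"
  proof
    assume "(\<lambda>_. 0) \<in> I"
    then have "(\<lambda>_. 0) \<in> mon_radical I" unfolding mon_radical_def by (auto intro: exI[of _ 1])
    then show False using rad by (auto simp: mon_max_def)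
  qed
  have "(\<lambda>j. k * xpow i 1 j) = xpow i k" by (auto simp: xpow_def)
  with k have "xpow i k \<in> I" by simp
  then obtain g where g: "g \<in> mingens I" "g \<le> xpow i k" using exists_mingen by blast
  have gI: "g \<in> I" using g by (auto simp: mingens_def)
  have g0: "\<And>j. j \<noteq> i \<Longrightarrow> g j = 0" using g(2) by (auto simp: le_fun_def xpow_def split: if_splits)
  have gi: "g i \<ge> 1"
  proof (rule ccontr)
    assume "\<not> g i \<ge> 1"
    then have "g i = 0" by simp
    then have "g = (\<lambda>_. 0)" unfolding fun_eq_iff using g0 by metis
    then show False using gI z by simp
  qed
  have gx: "g = xpow i (g i)" using g0 by (auto simp: xpow_def fun_eq_iff)
  have ex: "g i \<ge> 1 \<and> xpow i (g i) \<in> mingens I" using gi g gx by simp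
  have uniq: "e = g i" if "e \<ge> 1 \<and> xpow i e \<in> mingens I" for e
  proof -
    have a: "xpow i e \<in> mingens I" "xpow i (g i) \<in> mingens I" using that ex by auto
    show ?thesis
    proof (cases "e \<le> g i")
      case True
      then have "xpow i e \<le> xpow i (g i)" by (auto simp: le_fun_def xpow_def)
      then have "xpow i e = xpow i (g i)" using a unfolding mingens_def by auto
      then have "xpow i e i = xpow i (g i) i" by simp
      then show ?thesis by (simp add: xpow_def)
    next
      case False
      then have "xpow i (g i) \<le> xpow i e" by (auto simp: le_fun_def xpow_def)
      then have "xpow i e = xpow i (g i)" using a unfolding mingens_def by auto
      then have "xpow i e i = xpow i (g i) i" by simp
      then show ?thesis by (simp add: xpow_def)
    qed
  qed
  have "pdeg I i = g i" unfolding pdeg_def using ex uniq by (rule the_equality)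
  then show ?thesis using ex by simp
qed

lemma lift_box:
  fixes I :: "('n::finite) monomial set"
  assumes d: "\<And>i. pdeg I i \<ge> 1" and b: "in_box I a v" and vu: "v \<le> u"
  shows "in_box I (\<lambda>i. u i div pdeg I i) u \<and> (\<Sum>i\<in>UNIV. a i) \<le> (\<Sum>i\<in>UNIV. u i div pdeg I i)"
proof -
  have 1: "u i div pdeg I i * pdeg I i \<le> u i \<and> u i \<le> (u i div pdeg I i + 1) * pdeg I i" for i
  proof -
    have "0 < pdeg I i" using d[of i] by simp
    then have "u i mod pdeg I i < pdeg I i" by simp
    moreover have "u i = u i div pdeg I i * pdeg I i + u i mod pdeg I i" by (metis div_mult_mod_eq)
    ultimately show ?thesis by (simp add: distrib_right)
  qed
  have 2: "a i \<le> u i div pdeg I i" for i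
  proof -
    have "a i * pdeg I i \<le> u i" using b vu by (meson in_box_def le_funD order_trans)
    then show ?thesis using d[of i] by (simp add: less_eq_div_iff_mult_less_eq)
  qed
  show ?thesis using 1 2 by (auto simp: in_box_def intro: sum_mono)
qed

lemma mon_pow_cons: "v \<in> mon_pow I l \<Longrightarrow> w \<in> I \<Longrightarrow> (\<lambda>j. w j + v j) \<in> mon_pow I (Suc l)"
proof -
  assume v: "v \<in> mon_pow I l" and w: "w \<in> I"
  then obtain ms where ms: "length ms = l" "set ms \<subseteq> I" "mprod ms \<le> v" by (auto simp: mon_pow_def)
  have "mprod (w # ms) \<le> (\<lambda>j. w j + v j)" using ms(3) by (auto simp: mprod_def le_fun_def)
  then show ?thesis using ms w unfolding mon_pow_def by (intro CollectI exI[of _ "w # ms"]) auto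
qed

lemma sum_upd_one:
  fixes c :: "('n::finite) \<Rightarrow> nat"
  shows "(\<Sum>j\<in>UNIV. (c(i := c i + 1)) j) = (\<Sum>j\<in>UNIV. c j) + 1"
proof -
  have "c(i := c i + 1) = (\<lambda>j. c j + (if j = i then 1 else 0))" by auto
  then show ?thesis by (simp add: sum.distrib)
qed

lemma pure_prod:
  fixes I :: "('n::finite) monomial set" and a :: "'n \<Rightarrow> nat"
  assumes x: "\<And>i. xpow i (d i) \<in> I"
  shows "(\<Sum>i\<in>UNIV. a i) \<ge> l \<Longrightarrow> \<exists>c. c \<le> a \<and> (\<Sum>i\<in>UNIV. c i) = l \<and> (\<lambda>j. c j * d j) \<in> mon_pow I l"
proof (induction l)
  case 0
  have "(\<lambda>j. 0 * d j) \<in> mon_pow I 0" by (auto simp: mon_pow_def mprod_def le_fun_def)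
  then show ?case by (intro exI[of _ "\<lambda>_. 0"]) (auto simp: le_fun_def)
next
  case (Suc l)
  then obtain c where c: "c \<le> a" "(\<Sum>i\<in>UNIV. c i) = l" "(\<lambda>j. c j * d j) \<in> mon_pow I l" by auto
  have "\<exists>i. c i < a i"
  proof (rule ccontr)
    assume "\<not> ?thesis"
    then have "\<And>i. a i \<le> c i" by (simp add: not_less)
    then have "(\<Sum>i\<in>UNIV. a i) \<le> l" using c(2) by (metis sum_mono)
    then show False using Suc.prems by simp
  qed
  then obtain i where i: "c i < a i" by auto
  let ?c = "c(i := c i + 1)"
  have A: "?c \<le> a" using c(1) i by (auto simp: le_fun_def)
  have B: "(\<Sum>j\<in>UNIV. ?c j) = Suc l" using c(2) sum_upd_one[of c i] by simp
  have eq: "(\<lambda>j. xpow i (d i) j + c j * d j) = (\<lambda>j. ?c j * d j)"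
    by (auto simp: xpow_def fun_eq_iff)
  have C: "(\<lambda>j. ?c j * d j) \<in> mon_pow I (Suc l)"
    using mon_pow_cons[OF c(3) x[of i]] unfolding eq .
  show ?case by (rule exI[of _ ?c], intro conjI) (fact A, fact B, fact C)
qed



lemma mingen_list:
  fixes I :: "('n::finite) monomial set"
  shows "set ms \<subseteq> I \<Longrightarrow> \<exists>ms'. length ms' = length ms \<and> set ms' \<subseteq> mingens I \<and> mprod ms' \<le> mprod ms"
proof (induction ms)
  case Nil then show ?case by auto
next
  case (Cons m ms)
  then obtain ms' where ms': "length ms' = length ms" "set ms' \<subseteq> mingens I" "mprod ms' \<le> mprod ms" by auto
  obtain g where g: "g \<in> mingens I" "g \<le> m" using exists_mingen Cons.prems by (metis list.set_intros(1) subsetD)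
  have "mprod (g # ms') \<le> mprod (m # ms)"
    using g(2) ms'(3) by (auto simp: mprod_def le_fun_def add_mono)
  then show ?case using ms' g by (intro exI[of _ "g # ms'"]) auto
qed

theorem mainTheorem1:
  fixes I :: "('n::finite) monomial set"
  assumes "m_primary I"
  shows "(good I \<longleftrightarrow>
           (\<forall>l::nat. l \<ge> 1 \<longrightarrow> (\<forall>u \<in> mon_pow I l.
              \<exists>a. in_box I a u \<and> (\<Sum>i\<in>UNIV. a i) \<ge> l - 1)))
       \<and> (good I \<longleftrightarrow>
           (\<forall>l::nat. l \<ge> 1 \<longrightarrow> (\<forall>ms. length ms = l \<and> set ms \<subseteq> mingens I \<longrightarrow>
              (\<exists>a. in_box I a (mprod ms) \<and> (\<Sum>i\<in>UNIV. a i) \<ge> l - 1))))"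
  (is "(good I \<longleftrightarrow> ?P2) \<and> (good I \<longleftrightarrow> ?P3)")
proof -
  have d1: "\<And>i. pdeg I i \<ge> 1" using pdeg_props[OF assms] by blast
  have dx: "\<And>i. xpow i (pdeg I i) \<in> I" using pdeg_props[OF assms] by (auto simp: mingens_def)
  have GI: "mingens I \<subseteq> I" by (auto simp: mingens_def)
  have gP2: "?P2" if G: "good I"
  proof (intro allI impI ballI)
    fix l :: nat and u assume l: "l \<ge> 1" and u: "u \<in> mon_pow I l"
    obtain g where g: "g \<in> mingens (mon_pow I l)" "g \<le> u" using exists_mingen[OF u] by auto
    obtain a where a: "(\<Sum>i\<in>UNIV. a i) = l - 1" "in_box I a g" using G l g(1) unfolding good_def by blast
    show "\<exists>a. in_box I a u \<and> (\<Sum>i\<in>UNIV. a i) \<ge> l - 1"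
      using lift_box[OF d1 a(2) g(2)] a(1) by auto
  qed
  have P2g: "good I" if P2: "?P2"
    unfolding good_def
  proof (intro allI impI ballI)
    fix l :: nat and u assume l: "l \<ge> 1" and u: "u \<in> mingens (mon_pow I l)"
    have uI: "u \<in> mon_pow I l" using u by (auto simp: mingens_def)
    obtain a where a: "in_box I a u" "(\<Sum>i\<in>UNIV. a i) \<ge> l - 1" using P2 l uI by blast
    show "\<exists>a. (\<Sum>i\<in>UNIV. a i) = l - 1 \<and> in_box I a u"
    proof (cases "(\<Sum>i\<in>UNIV. a i) = l - 1")
      case True then show ?thesis using a by blast
    next
      case False
      then have "(\<Sum>i\<in>UNIV. a i) \<ge> l" using a(2) by simp
      from pure_prod[OF dx this] obtain c where
        c: "c \<le> a" "(\<Sum>i\<in>UNIV. c i) = l" "(\<lambda>j. c j * pdeg I j) \<in> mon_pow I l" by blast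
      have le: "(\<lambda>j. c j * pdeg I j) \<le> u"
      proof (rule le_funI)
        fix j
        have "c j * pdeg I j \<le> a j * pdeg I j" using c(1) by (simp add: le_fun_def)
        also have "\<dots> \<le> u j" using a(1) by (simp add: in_box_def)
        finally show "c j * pdeg I j \<le> u j" .
      qed
      have ueq: "u = (\<lambda>j. c j * pdeg I j)" using u c(3) le unfolding mingens_def by blast
      have ac: "a = c"
      proof
        fix j
        have "a j * pdeg I j \<le> c j * pdeg I j" using a(1) ueq by (auto simp: in_box_def dest: fun_cong)
        then have "a j \<le> c j" using d1[of j] by simp
        moreover have "c j \<le> a j" using c(1) by (simp add: le_fun_def)
        ultimately show "a j = c j" by simp
      qed
      have "\<exists>i. c i \<ge> 1"
      proof (rule ccontr)
        assume "\<not> ?thesis"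
        then have "\<And>i. c i = 0" by (metis One_nat_def not_less_eq_eq le_zero_eq)
        then show False using c(2) l by simp
      qed
      then obtain i where i: "c i \<ge> 1" by auto
      define a' where "a' = c(i := c i - 1)"
      have "c = a'(i := a' i + 1)" using i by (auto simp: a'_def)
      then have "(\<Sum>j\<in>UNIV. a' j) + 1 = l" using sum_upd_one[of a' i] c(2) by simp
      moreover have "in_box I a' u"
        unfolding in_box_def
      proof
        fix j
        show "a' j * pdeg I j \<le> u j \<and> u j \<le> (a' j + 1) * pdeg I j"
        proof (cases "j = i")
          case True
          then show ?thesis using i ueq by (simp add: a'_def mult_le_mono1)
        next
          case False
          then show ?thesis using ueq by (simp add: a'_def)
        qed
      qed
      ultimately show ?thesis by (intro exI[of _ a']) auto
    qed
  qed
  have P23: "?P3" if P2: "?P2"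
  proof (intro allI impI)
    fix l :: nat and ms assume l: "l \<ge> 1" and ms: "length ms = l \<and> set ms \<subseteq> mingens I"
    have "mprod ms \<in> mon_pow I l" using ms GI unfolding mon_pow_def by blast
    then show "\<exists>a. in_box I a (mprod ms) \<and> (\<Sum>i\<in>UNIV. a i) \<ge> l - 1" using P2 l by blast
  qed
  have P32: "?P2" if P3: "?P3"
  proof (intro allI impI ballI)
    fix l :: nat and u assume l: "l \<ge> 1" and u: "u \<in> mon_pow I l"
    then obtain ms where ms: "length ms = l" "set ms \<subseteq> I" "mprod ms \<le> u" by (auto simp: mon_pow_def)
    obtain ms' where ms': "length ms' = l" "set ms' \<subseteq> mingens I" "mprod ms' \<le> mprod ms"
      using mingen_list[OF ms(2)] ms(1) by auto
    obtain a where a: "in_box I a (mprod ms')" "(\<Sum>i\<in>UNIV. a i) \<ge> l - 1" using P3 l ms' by blast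
    have "mprod ms' \<le> u" using ms'(3) ms(3) by (rule order_trans)
    from lift_box[OF d1 a(1) this] a(2)
    show "\<exists>a. in_box I a u \<and> (\<Sum>i\<in>UNIV. a i) \<ge> l - 1" by auto
  qed
  show ?thesis using gP2 P2g P23 P32 by blast
qed

end
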